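(* Let $N=\{1,\dots,n\}$ with $n\ge2$, let $A=\{a_1,\dots,a_k\}$ be finite and $u_1,\dots,u_n:A\to\mathbb{R}$ arbitrary. In the $P^{n-1}\&C$ game defined in the context, (i) every subgame-perfect Nash equilibrium has an outcome $a$ that is efficient, i.e. $\sum_{i=1}^n u_i(a)=\max_{b\in A}\sum_{i=1}^n u_i(b)$, and (ii) every efficient option is the outcome of some subgame-perfect Nash equilibrium.
   Context: Players have quasi-linear utilities $u_i(a)+t_i$. Let $P=\{p\in\mathbb{R}^k:\sum_j p_j=0\}$. The $P^{n-1}\&C$ game: player 1 chooses $p^2\in P$; then for $i=2,\dots,n-1$ in order, player $i$, having observed $p^2,\dots,p^i$, chooses $p^{i+1}\in P$; finally player $n$, having observed $p^2,\dots,p^n$, chooses an option $a\in A$ (the outcome). Then player $n$ pays $p^n(a)$ to player $n-1$, and each player $m\in\{2,\dots,n-1\}$ pays $p^m(a)$ to player $m-1$ while receiving $p^{m+1}(a)$ from player $m+1$. Payoffs: $g_1=u_1(a)+p^2(a)$; $g_m=u_m(a)-p^m(a)+p^{m+1}(a)$ for $2\le m\le n-1$; $g_n=u_n(a)-p^n(a)$. A pure strategy for player $i<n$ maps each history $(p^2,\dots,p^i)$ to an element of $P$; for player $n$ it maps each $(p^2,\dots,p^n)$ to an element of $A$. A subgame-perfect Nash equilibrium is a strategy profile whose restriction to every subgame is a Nash equilibrium of that subgame; its outcome is the option chosen on the path of play. *)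

theory Defs
  imports Complex_Main
begin

definition Pset :: "'a set \<Rightarrow> ('a \<Rightarrow> real) set" where
  "Pset A = {p. (\<forall>x. x \<notin> A \<longrightarrow> p x = 0) \<and> sum p A = 0}"

text \<open>A history is the list [p^2, ..., p^m] of announcements made so far.
  A profile consists of s (s i h = announcement p^(i+1) of player i, 1 <= i <= n-1,
  at history h of length i-1) and t (choice of player n at a history of length n-1).\<close>

type_synonym 'a hist = "('a \<Rightarrow> real) list"

definition valid_msgs :: "nat \<Rightarrow> 'a set \<Rightarrow> (nat \<Rightarrow> 'a hist \<Rightarrow> ('a \<Rightarrow> real)) \<Rightarrow> bool" where
  "valid_msgs n A s \<longleftrightarrow>
     (\<forall>i\<in>{1..n-1}. \<forall>h. length h = i - 1 \<and> set h \<subseteq> Pset A \<longrightarrow> s i h \<in> Pset A)"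

definition valid_choice :: "nat \<Rightarrow> 'a set \<Rightarrow> ('a hist \<Rightarrow> 'a) \<Rightarrow> bool" where
  "valid_choice n A t \<longleftrightarrow> (\<forall>h. length h = n - 1 \<and> set h \<subseteq> Pset A \<longrightarrow> t h \<in> A)"

fun play :: "(nat \<Rightarrow> 'a hist \<Rightarrow> ('a \<Rightarrow> real)) \<Rightarrow> nat \<Rightarrow> 'a hist \<Rightarrow> 'a hist" where
  "play s 0 h = h"
| "play s (Suc k) h = play s k (h @ [s (Suc (length h)) h])"

definition terminal :: "nat \<Rightarrow> (nat \<Rightarrow> 'a hist \<Rightarrow> ('a \<Rightarrow> real)) \<Rightarrow> 'a hist \<Rightarrow> 'a hist" where
  "terminal n s h = play s (n - 1 - length h) h"

definition outcome :: "nat \<Rightarrow> (nat \<Rightarrow> 'a hist \<Rightarrow> ('a \<Rightarrow> real)) \<Rightarrow> ('a hist \<Rightarrow> 'a) \<Rightarrow> 'a hist \<Rightarrow> 'a" where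
  "outcome n s t h = t (terminal n s h)"

text \<open>Payoff of player i in the subgame starting at history h. In the terminal history H,
  p^m = H ! (m - 2).\<close>
definition payoff :: "nat \<Rightarrow> (nat \<Rightarrow> 'a \<Rightarrow> real) \<Rightarrow> (nat \<Rightarrow> 'a hist \<Rightarrow> ('a \<Rightarrow> real))
    \<Rightarrow> ('a hist \<Rightarrow> 'a) \<Rightarrow> 'a hist \<Rightarrow> nat \<Rightarrow> real" where
  "payoff n u s t h i =
     (let H = terminal n s h; a = t H in
      if i = 1 then u 1 a + (H ! 0) a
      else if i = n then u n a - (H ! (n - 2)) a
      else u i a - (H ! (i - 2)) a + (H ! (i - 1)) a)"

definition nodes :: "nat \<Rightarrow> 'a set \<Rightarrow> 'a hist set" where
  "nodes n A = {h. length h \<le> n - 1 \<and> set h \<subseteq> Pset A}"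

definition SPNE :: "nat \<Rightarrow> 'a set \<Rightarrow> (nat \<Rightarrow> 'a \<Rightarrow> real)
    \<Rightarrow> (nat \<Rightarrow> 'a hist \<Rightarrow> ('a \<Rightarrow> real)) \<Rightarrow> ('a hist \<Rightarrow> 'a) \<Rightarrow> bool" where
  "SPNE n A u s t \<longleftrightarrow> valid_msgs n A s \<and> valid_choice n A t \<and>
     (\<forall>h\<in>nodes n A.
        (\<forall>i\<in>{1..n-1}. \<forall>\<sigma>. valid_msgs n A (s(i := \<sigma>)) \<longrightarrow>
            payoff n u (s(i := \<sigma>)) t h i \<le> payoff n u s t h i) \<and>
        (\<forall>t'. valid_choice n A t' \<longrightarrow> payoff n u s t' h n \<le> payoff n u s t h n))"

definition efficient :: "nat \<Rightarrow> 'a set \<Rightarrow> (nat \<Rightarrow> 'a \<Rightarrow> real) \<Rightarrow> 'a \<Rightarrow> bool" where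
  "efficient n A u a \<longleftrightarrow> a \<in> A \<and>
     (\<Sum>i=1..n. u i a) = (MAX b\<in>A. \<Sum>i=1..n. u i b)"

end

theory Submission
  imports Defs
begin


lemma length_play[simp]: "length (play s k h) = length h + k"
  by (induction k arbitrary: h) auto

lemma play_append: "\<exists>ys. play s k h = h @ ys"
proof (induction k arbitrary: h)
  case 0 thus ?case by simp
next
  case (Suc k)
  then obtain ys where "play s k (h @ [s (Suc (length h)) h]) = (h @ [s (Suc (length h)) h]) @ ys" by blast
  then show ?case by auto
qed

lemma play_nth_old: "i < length h \<Longrightarrow> play s k h ! i = h ! i"
  using play_append[of s k h] by (auto simp: nth_append)

lemma play_nth_new: "length h \<le> i \<Longrightarrow> i < length h + k \<Longrightarrow> \<exists>hh. play s k h ! i = s (Suc i) hh"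
proof (induction k arbitrary: h)
  case 0 thus ?case by simp
next
  case (Suc k)
  show ?case
  proof (cases "i = length h")
    case True
    then have "play s (Suc k) h ! i = (h @ [s (Suc (length h)) h]) ! i"
      using play_nth_old[of i "h @ [s (Suc (length h)) h]" s k] by simp
    then show ?thesis using True by auto
  next
    case False
    then show ?thesis using Suc.IH[of "h @ [s (Suc (length h)) h]"] Suc.prems by simp
  qed
qed

lemma play_add: "play s (a + b) h = play s b (play s a h)"
  by (induction a arbitrary: h) auto

lemma play_cong: "(\<And>j. length h < j \<Longrightarrow> j \<le> length h + k \<Longrightarrow> s' j = s j) \<Longrightarrow> play s' k h = play s k h"
proof (induction k arbitrary: h)
  case 0 thus ?case by simp
next
  case (Suc k)
  have e: "s' (Suc (length h)) = s (Suc (length h))" using Suc.prems by simp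
  have "play s' k (h @ [s (Suc (length h)) h]) = play s k (h @ [s (Suc (length h)) h])"
    by (rule Suc.IH) (use Suc.prems in auto)
  then show ?case using e by simp
qed

lemma play_valid: "valid_msgs n A s \<Longrightarrow> set h \<subseteq> Pset A \<Longrightarrow> length h + k \<le> n - 1 \<Longrightarrow> set (play s k h) \<subseteq> Pset A"
proof (induction k arbitrary: h)
  case 0 thus ?case by simp
next
  case (Suc k)
  have "Suc (length h) \<in> {1..n-1}" using Suc.prems by auto
  then have "s (Suc (length h)) h \<in> Pset A"
    using Suc.prems unfolding valid_msgs_def by auto
  then show ?case using Suc.IH[of "h @ [s (Suc (length h)) h]"] Suc.prems by auto
qed

lemma term_after:
  assumes "i \<le> length h"
  shows "terminal n (s(i := \<sigma>)) h = terminal n s h"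
  unfolding terminal_def by (rule play_cong) (use assms in auto)

lemma term_dev:
  fixes s :: "nat \<Rightarrow> 'a hist \<Rightarrow> ('a \<Rightarrow> real)" and h :: "'a hist"
  assumes "length h < i" "i \<le> n - 1"
  defines "h'' \<equiv> play s (i - 1 - length h) h"
  shows "terminal n (s(i := \<sigma>)) h = terminal n s (h'' @ [\<sigma> h''])"
    and "terminal n s h = terminal n s h''"
    and "terminal n s h = terminal n s (h'' @ [s i h''])"
    and "length h'' = i - 1"
proof -
  show L: "length h'' = i - 1" using assms by simp
  have nd: "n - 1 - length h = (i - 1 - length h) + Suc (n - 1 - i)" using assms by simp
  have Si: "Suc (length h'') = i" using L assms by simp
  have c1: "play (s(i := \<sigma>)) (i - 1 - length h) h = h''"
    unfolding h''_def by (rule play_cong) (use assms in auto)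
  have "terminal n (s(i := \<sigma>)) h = play (s(i := \<sigma>)) (Suc (n - 1 - i)) h''"
    unfolding terminal_def nd play_add c1 ..
  also have "\<dots> = play (s(i := \<sigma>)) (n - 1 - i) (h'' @ [\<sigma> h''])"
    using Si by simp
  also have "\<dots> = play s (n - 1 - i) (h'' @ [\<sigma> h''])"
    by (rule play_cong) (use L assms in auto)
  also have "\<dots> = terminal n s (h'' @ [\<sigma> h''])"
    unfolding terminal_def using L assms by simp
  finally show "terminal n (s(i := \<sigma>)) h = terminal n s (h'' @ [\<sigma> h''])" .
  have "terminal n s h = play s (Suc (n - 1 - i)) h''"
    unfolding terminal_def nd play_add h''_def ..
  moreover have "terminal n s h'' = play s (Suc (n - 1 - i)) h''"
    unfolding terminal_def using L assms by (simp add: Suc_diff_Suc)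
  moreover have "play s (Suc (n - 1 - i)) h'' = terminal n s (h'' @ [s i h''])"
    unfolding terminal_def using L assms Si by simp
  ultimately show "terminal n s h = terminal n s h''" "terminal n s h = terminal n s (h'' @ [s i h''])"
    by auto
qed

definition Gh :: "nat \<Rightarrow> (nat \<Rightarrow> 'a \<Rightarrow> real) \<Rightarrow> 'a hist \<Rightarrow> nat \<Rightarrow> 'a \<Rightarrow> real" where
  "Gh n u H j x = (\<Sum>i=j..n. u i x) - (if j = 1 \<or> n < j then 0 else (H ! (j - 2)) x)"

lemma Gh_append: "1 \<le> j \<Longrightarrow> j \<le> length h + 1 \<Longrightarrow> Gh n u (h @ ys) j = Gh n u h j"
  unfolding Gh_def by (rule ext) (auto simp: nth_append)

lemma Gh_play: "1 \<le> j \<Longrightarrow> j \<le> length h + 1 \<Longrightarrow> Gh n u (play s k h) j = Gh n u h j"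
  using play_append[of s k h] Gh_append by metis

lemma Gh_term: "1 \<le> j \<Longrightarrow> j \<le> length h + 1 \<Longrightarrow> Gh n u (terminal n s h) j = Gh n u h j"
  unfolding terminal_def by (rule Gh_play)

lemma Gh_Suc_n: "Gh n u H (Suc n) x = 0"
  unfolding Gh_def by simp

lemma Gh_last: "length h = j - 2 \<Longrightarrow> 2 \<le> j \<Longrightarrow> j \<le> n \<Longrightarrow> Gh n u (h @ [q]) j x = (\<Sum>i=j..n. u i x) - q x"
  unfolding Gh_def using nth_append_length[of h q] by (auto simp del: nth_append_length)

lemma payoff_Gh:
  assumes "2 \<le> n" "1 \<le> i" "i \<le> n"
  shows "payoff n u s t h i = Gh n u (terminal n s h) i (t (terminal n s h))
           - Gh n u (terminal n s h) (Suc i) (t (terminal n s h))"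
proof -
  have sp: "(\<Sum>j=i..n. u j x) = u i x + (\<Sum>j=Suc i..n. u j x)" for x
    using assms(3) by (simp add: sum.atLeast_Suc_atMost)
  show ?thesis
    unfolding payoff_def Gh_def Let_def sp using assms
    by (auto simp: numeral_2_eq_2 Suc_diff_Suc)
qed

lemma Pset_sum: "q \<in> Pset A \<Longrightarrow> sum q A = 0"
  unfolding Pset_def by auto

lemma max_ge_avg:
  fixes f :: "'a \<Rightarrow> real"
  assumes "finite A" "a \<in> A" "\<forall>x\<in>A. f x \<le> f a"
  shows "sum f A / real (card A) \<le> f a"
proof -
  have "sum f A \<le> sum (\<lambda>_. f a) A" by (rule sum_mono) (use assms in auto)
  then have "sum f A \<le> real (card A) * f a" by simp
  moreover have "real (card A) > 0" using assms card_gt_0_iff by fastforce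
  ultimately show ?thesis by (simp add: pos_divide_le_eq mult.commute)
qed



lemma spne_opt:
  assumes spne: "SPNE n A u s t" and n2: "2 \<le> n" and fin: "finite A" and ne: "A \<noteq> {}"
  shows "1 \<le> m \<Longrightarrow> m \<le> n \<Longrightarrow> length h = m - 1 \<Longrightarrow> set h \<subseteq> Pset A \<Longrightarrow>
     t (terminal n s h) \<in> A \<and> (\<forall>b\<in>A. Gh n u h m b \<le> Gh n u h m (t (terminal n s h)))"
proof (induction "n - m" arbitrary: m h)
  case 0
  then have m: "m = n" by simp
  have vs: "valid_msgs n A s" and vc: "valid_choice n A t" using spne unfolding SPNE_def by auto
  have H: "terminal n s h = h" unfolding terminal_def using 0 m by simp
  have node: "h \<in> nodes n A" unfolding nodes_def using 0 by auto
  have tA: "t h \<in> A" using vc 0 m unfolding valid_choice_def by auto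
  have "Gh n u h n b \<le> Gh n u h n (t h)" if b: "b \<in> A" for b
  proof -
    have "valid_choice n A (t(h := b))" using vc b unfolding valid_choice_def by auto
    then have "payoff n u s (t(h := b)) h n \<le> payoff n u s t h n"
      using spne node unfolding SPNE_def by blast
    then show ?thesis using payoff_Gh[of n n u s] n2 H by (simp add: Gh_Suc_n)
  qed
  then show ?case using H tA m by simp
next
  case (Suc d)
  have vs: "valid_msgs n A s" and vc: "valid_choice n A t" using spne unfolding SPNE_def by auto
  have mn: "m < n" "m \<le> n - 1" using Suc by auto
  have node: "h \<in> nodes n A" unfolding nodes_def using Suc by auto
  have IH: "t (terminal n s (h @ [q])) \<in> A \<and> (\<forall>b\<in>A. Gh n u (h @ [q]) (Suc m) b
      \<le> Gh n u (h @ [q]) (Suc m) (t (terminal n s (h @ [q]))))" if q: "q \<in> Pset A" for q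
    using Suc.hyps(1)[of "Suc m" "h @ [q]"] Suc.hyps(2) Suc.prems q by auto
  define U where "U x = (\<Sum>i=Suc m..n. u i x)" for x
  define S where "S = (\<Sum>x\<in>A. U x)"
  define k where "k = real (card A)"
  have kpos: "k > 0" unfolding k_def using fin ne card_gt_0_iff by fastforce
  have GU: "Gh n u (h @ [q]) (Suc m) x = U x - q x" for q x
    unfolding U_def by (rule Gh_last) (use Suc.prems mn in auto)
  define p where "p = s m h"
  have pP: "p \<in> Pset A" unfolding p_def using vs Suc.prems mn unfolding valid_msgs_def by auto
  have Hs: "terminal n s h = terminal n s (h @ [p])"
    using term_dev(3)[of h m n s] Suc.prems mn unfolding p_def by simp
  define a where "a = t (terminal n s h)"
  have aA: "a \<in> A" and amax: "\<forall>b\<in>A. U b - p b \<le> U a - p a"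
    using IH[OF pP] Hs GU unfolding a_def by auto
  have "sum (\<lambda>x. U x - p x) A / k \<le> U a - p a"
    unfolding k_def by (rule max_ge_avg) (use fin aA amax in auto)
  moreover have "sum (\<lambda>x. U x - p x) A = S"
    using Pset_sum[OF pP] unfolding S_def by (simp add: sum_subtractf)
  ultimately have Sa: "S / k \<le> U a - p a" by simp
  have pay_s: "payoff n u s t h m = Gh n u h m a - (U a - p a)"
    using payoff_Gh[of n m u s t h] n2 Suc.prems mn Hs Gh_term[of m "h @ [p]" n u s]
      Gh_term[of "Suc m" "h @ [p]" n u s] GU Gh_append[of m h n u "[p]"] unfolding a_def by auto
  have "Gh n u h m b \<le> Gh n u h m a" if bA: "b \<in> A" for b
  proof (rule field_le_epsilon)
    fix e :: real assume e: "0 < e"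
    define q where "q x = (if x \<in> A then U x - S / k - (if x = b then e else 0) + e / k else 0)" for x
    have "sum q A = sum (\<lambda>x. U x - S / k - (if x = b then e else 0) + e / k) A"
      unfolding q_def by (rule sum.cong) auto
    also have "\<dots> = S - k * (S / k) - e + k * (e / k)"
      using bA fin unfolding S_def k_def
      by (simp add: sum.distrib sum_subtractf)
    also have "\<dots> = 0" using kpos by simp
    finally have qP: "q \<in> Pset A" unfolding Pset_def q_def by auto
    define \<sigma> where "\<sigma> = (s m)(h := q)"
    have vd: "valid_msgs n A (s(m := \<sigma>))"
      using vs qP unfolding valid_msgs_def \<sigma>_def by auto
    have mI: "m \<in> {1..n-1}" using Suc.prems mn by auto
    have le: "payoff n u (s(m := \<sigma>)) t h m \<le> payoff n u s t h m"
      using spne node vd mI unfolding SPNE_def by blast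
    have Hd: "terminal n (s(m := \<sigma>)) h = terminal n s (h @ [q])"
      using term_dev(1)[of h m n s \<sigma>] Suc.prems mn unfolding \<sigma>_def by simp
    define a' where "a' = t (terminal n s (h @ [q]))"
    have a'A: "a' \<in> A" and a'max: "\<forall>c\<in>A. U c - q c \<le> U a' - q a'"
      using IH[OF qP] GU unfolding a'_def by auto
    have Uq: "U x - q x = S / k + (if x = b then e else 0) - e / k" if "x \<in> A" for x
      using that unfolding q_def by simp
    have "a' = b"
    proof (rule ccontr)
      assume "a' \<noteq> b"
      then show False using a'max bA a'A Uq[OF bA] Uq[OF a'A] e by auto
    qed
    have pay_d: "payoff n u (s(m := \<sigma>)) t h m = Gh n u h m b - (S / k + e - e / k)"
      using payoff_Gh[of n m u "s(m := \<sigma>)" t h] n2 Suc.prems mn Hd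
        Gh_term[of m "h @ [q]" n u s] Gh_term[of "Suc m" "h @ [q]" n u s] GU
        Gh_append[of m h n u "[q]"] \<open>a' = b\<close> Uq[OF bA] unfolding a'_def by auto
    have "e / k \<ge> 0" using e kpos by simp
    then show "Gh n u h m b \<le> Gh n u h m a + e"
      using le pay_d pay_s Sa by linarith
  qed
  then show ?case using aA unfolding a_def by auto
qed



definition argmx :: "('a \<Rightarrow> real) \<Rightarrow> 'a set \<Rightarrow> 'a set" where
  "argmx f S = {x\<in>S. \<forall>y\<in>S. f y \<le> f x}"

fun Tr :: "nat \<Rightarrow> (nat \<Rightarrow> 'a \<Rightarrow> real) \<Rightarrow> 'a set \<Rightarrow> 'a hist \<Rightarrow> nat \<Rightarrow> 'a set" where
  "Tr n u A H 0 = A"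
| "Tr n u A H (Suc d) = argmx (Gh n u H (n - d)) (Tr n u A H d)"

lemma argmx_ne: "finite S \<Longrightarrow> S \<noteq> {} \<Longrightarrow> argmx f S \<noteq> {}"
proof -
  assume "finite S" "S \<noteq> {}"
  then have "Max (f ` S) \<in> f ` S" by (intro Max_in) auto
  then obtain x where "x \<in> S" "f x = Max (f ` S)" by auto
  then have "x \<in> argmx f S" unfolding argmx_def using \<open>finite S\<close> by auto
  then show ?thesis by auto
qed

lemma Tr_sub: "Tr n u A H (Suc d) \<subseteq> Tr n u A H d"
  by (auto simp: argmx_def)

lemma Tr_mono: "d \<le> d' \<Longrightarrow> Tr n u A H d' \<subseteq> Tr n u A H d"
  using lift_Suc_antimono_le[of "Tr n u A H", OF Tr_sub] by blast

lemma Tr_ne: "finite A \<Longrightarrow> A \<noteq> {} \<Longrightarrow> Tr n u A H d \<noteq> {} \<and> finite (Tr n u A H d)"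
proof (induction d)
  case 0 thus ?case by simp
next
  case (Suc d)
  then show ?case using argmx_ne[of "Tr n u A H d"] Tr_sub[of n u A H d] finite_subset by auto
qed

lemma Tr_const:
  assumes "\<And>j x y. m < j \<Longrightarrow> j \<le> n \<Longrightarrow> x \<in> A \<Longrightarrow> y \<in> A \<Longrightarrow> Gh n u H j x = Gh n u H j y"
  shows "d \<le> n - m \<Longrightarrow> Tr n u A H d = A"
proof (induction d)
  case 0 thus ?case by simp
next
  case (Suc d)
  then have "Tr n u A H d = A" by simp
  moreover have "m < n - d" "n - d \<le> n" using Suc.prems by auto
  have eq: "\<And>x y. x \<in> A \<Longrightarrow> y \<in> A \<Longrightarrow> Gh n u H (n - d) x = Gh n u H (n - d) y"
    using assms \<open>m < n - d\<close> \<open>n - d \<le> n\<close> by blast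
  have "argmx (Gh n u H (n - d)) A = A"
  proof
    show "argmx (Gh n u H (n - d)) A \<subseteq> A" unfolding argmx_def by blast
    show "A \<subseteq> argmx (Gh n u H (n - d)) A" unfolding argmx_def
    proof (intro subsetI CollectI conjI ballI)
      fix x y assume "x \<in> A" "y \<in> A"
      then show "Gh n u H (n - d) y \<le> Gh n u H (n - d) x" using eq[of y x] by simp
    qed
  qed
  ultimately show ?case by simp
qed

lemma Tr_max:
  assumes "\<And>j x y. m < j \<Longrightarrow> j \<le> n \<Longrightarrow> x \<in> A \<Longrightarrow> y \<in> A \<Longrightarrow> Gh n u H j x = Gh n u H j y"
    and "1 \<le> m" "m \<le> n"
  shows "Tr n u A H n = argmx (Gh n u H m) A \<or> Tr n u A H n \<subseteq> argmx (Gh n u H m) A"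
proof -
  have "Tr n u A H (Suc (n - m)) = argmx (Gh n u H m) A"
  proof -
    have "Tr n u A H (n - m) = A" using Tr_const[of m n A u H "n - m"] assms by blast
    moreover have "n - (n - m) = m" using assms by simp
    ultimately show ?thesis by simp
  qed
  moreover have "Tr n u A H n \<subseteq> Tr n u A H (Suc (n - m))"
    by (rule Tr_mono) (use assms in auto)
  ultimately show ?thesis by auto
qed

definition sfun :: "nat \<Rightarrow> (nat \<Rightarrow> 'a \<Rightarrow> real) \<Rightarrow> 'a set \<Rightarrow> nat \<Rightarrow> 'a \<Rightarrow> real" where
  "sfun n u A j = (\<lambda>x. if x \<in> A then (\<Sum>i=j..n. u i x) - (\<Sum>y\<in>A. \<Sum>i=j..n. u i y) / real (card A) else 0)"

definition sC :: "nat \<Rightarrow> (nat \<Rightarrow> 'a \<Rightarrow> real) \<Rightarrow> 'a set \<Rightarrow> nat \<Rightarrow> 'a hist \<Rightarrow> ('a \<Rightarrow> real)" where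
  "sC n u A = (\<lambda>i h. sfun n u A (Suc i))"

definition tC :: "nat \<Rightarrow> (nat \<Rightarrow> 'a \<Rightarrow> real) \<Rightarrow> 'a set \<Rightarrow> 'a \<Rightarrow> 'a hist \<Rightarrow> 'a" where
  "tC n u A a = (\<lambda>H. if a \<in> Tr n u A H n then a else (SOME x. x \<in> Tr n u A H n))"

lemma tC_in: "finite A \<Longrightarrow> A \<noteq> {} \<Longrightarrow> tC n u A a H \<in> Tr n u A H n"
  unfolding tC_def using Tr_ne[of A n u H n] by (auto intro: someI_ex)

lemma tC_A: "finite A \<Longrightarrow> A \<noteq> {} \<Longrightarrow> tC n u A a H \<in> A"
  using tC_in Tr_mono[of 0 n n u A H] by fastforce

lemma sfun_P: "finite A \<Longrightarrow> A \<noteq> {} \<Longrightarrow> sfun n u A j \<in> Pset A"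
proof -
  assume fin: "finite A" and ne: "A \<noteq> {}"
  have k: "real (card A) > 0" using fin ne card_gt_0_iff by fastforce
  have "sum (sfun n u A j) A = sum (\<lambda>x. (\<Sum>i=j..n. u i x) - (\<Sum>y\<in>A. \<Sum>i=j..n. u i y) / real (card A)) A"
    unfolding sfun_def by (rule sum.cong) auto
  also have "\<dots> = 0" using k by (simp add: sum_subtractf)
  finally show ?thesis unfolding Pset_def sfun_def by auto
qed

lemma sC_valid: "finite A \<Longrightarrow> A \<noteq> {} \<Longrightarrow> valid_msgs n A (sC n u A)"
  unfolding valid_msgs_def sC_def using sfun_P by blast

lemma sC_const:
  assumes "length h0 \<le> n - 1" "length h0 + 2 \<le> j" "j \<le> n" "x \<in> A"
  shows "Gh n u (terminal n (sC n u A) h0) j x = (\<Sum>y\<in>A. \<Sum>i=j..n. u i y) / real (card A)"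
proof -
  let ?H = "terminal n (sC n u A) h0"
  have "\<exists>hh. ?H ! (j - 2) = sC n u A (Suc (j - 2)) hh"
    unfolding terminal_def by (rule play_nth_new) (use assms in auto)
  then have "?H ! (j - 2) = sfun n u A j" unfolding sC_def using assms by (auto simp: Suc_diff_Suc numeral_2_eq_2)
  then show ?thesis unfolding Gh_def sfun_def using assms by auto
qed

lemma part2:
  assumes n2: "2 \<le> n" and fin: "finite A" and ne: "A \<noteq> {}" and eff: "efficient n A u a"
  shows "SPNE n A u (sC n u A) (tC n u A a) \<and> outcome n (sC n u A) (tC n u A a) [] = a"
proof -
  define s where "s = sC n u A"
  define t where "t = tC n u A a"
  define C where "C j = (\<Sum>y\<in>A. \<Sum>i=j..n. u i y) / real (card A)" for j
  have vs: "valid_msgs n A s" unfolding s_def by (rule sC_valid[OF fin ne])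
  have vc: "valid_choice n A t" unfolding valid_choice_def t_def using tC_A[OF fin ne] by blast
  have tTr: "t H \<in> Tr n u A H n" for H unfolding t_def by (rule tC_in[OF fin ne])
  have const: "Gh n u (terminal n s h0) j x = C j"
    if "length h0 \<le> n - 1" "length h0 + 2 \<le> j" "j \<le> n" "x \<in> A" for h0 j x
    unfolding s_def C_def by (rule sC_const) (use that in auto)
  have tmax: "t (terminal n s h0) \<in> A \<and> (\<forall>y\<in>A. Gh n u (terminal n s h0) m y \<le> Gh n u (terminal n s h0) m (t (terminal n s h0)))"
    if "length h0 \<le> n - 1" "length h0 + 1 \<le> m" "1 \<le> m" "m \<le> n" for h0 m
  proof -
    have cc: "Gh n u (terminal n s h0) j x = Gh n u (terminal n s h0) j y"
      if "m < j" "j \<le> n" "x \<in> A" "y \<in> A" for j x y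
    proof -
      have "length h0 + 2 \<le> j" using that \<open>length h0 + 1 \<le> m\<close> by simp
      then show ?thesis using const[of h0 j x] const[of h0 j y] that \<open>length h0 \<le> n - 1\<close> by simp
    qed
    have "Tr n u A (terminal n s h0) n \<subseteq> argmx (Gh n u (terminal n s h0) m) A"
      using Tr_max[of m n A u "terminal n s h0", OF cc] that by blast
    then show ?thesis using tTr unfolding argmx_def by blast
  qed
  have spne: "SPNE n A u s t"
    unfolding SPNE_def
  proof (intro conjI vs vc ballI allI impI)
    fix h assume node: "h \<in> nodes n A"
    then have hl: "length h \<le> n - 1" and hP: "set h \<subseteq> Pset A" unfolding nodes_def by auto
    let ?H = "terminal n s h"
    have HP: "set ?H \<subseteq> Pset A" "length ?H = n - 1"
      unfolding terminal_def using play_valid[OF vs hP] hl by auto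
    {
      fix t' assume vc': "valid_choice n A t'"
      have "t' ?H \<in> A" using vc' HP unfolding valid_choice_def by auto
      moreover have "t ?H \<in> argmx (Gh n u ?H n) A"
        using tTr[of ?H] Tr_mono[of 1 n n u A ?H] n2 by auto
      ultimately show "payoff n u s t' h n \<le> payoff n u s t h n"
        using payoff_Gh[of n n u s _ h] n2 unfolding argmx_def by (simp add: Gh_Suc_n)
    }
    fix i \<sigma> assume iI: "i \<in> {1..n-1}" and vd: "valid_msgs n A (s(i := \<sigma>))"
    show "payoff n u (s(i := \<sigma>)) t h i \<le> payoff n u s t h i"
    proof (cases "i \<le> length h")
      case True
      then show ?thesis unfolding payoff_def using term_after[OF True] by simp
    next
      case False
      then have il: "length h < i" "i \<le> n - 1" "1 \<le> i" using iI by auto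
      define h'' where "h'' = play s (i - 1 - length h) h"
      have td: "terminal n (s(i := \<sigma>)) h = terminal n s (h'' @ [\<sigma> h''])"
          "terminal n s h = terminal n s h''" "terminal n s h = terminal n s (h'' @ [s i h''])"
          "length h'' = i - 1"
        using term_dev(1)[of h i n s \<sigma>] term_dev(2-4)[of h i n s] il unfolding h''_def by auto
      have h''P: "set h'' \<subseteq> Pset A" unfolding h''_def using play_valid[OF vs hP] il by auto
      have qP: "\<sigma> h'' \<in> Pset A"
        using vd h''P td(4) il unfolding valid_msgs_def by fastforce
      define H' where "H' = terminal n s (h'' @ [\<sigma> h''])"
      define H where "H = terminal n s h''"
      have H'l: "length (h'' @ [\<sigma> h'']) \<le> n - 1" using td(4) il by auto
      have m1: "t H' \<in> A" "\<forall>y\<in>A. Gh n u H' (Suc i) y \<le> Gh n u H' (Suc i) (t H')"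
        using tmax[of "h'' @ [\<sigma> h'']" "Suc i"] H'l td(4) il unfolding H'_def by auto
      have GH': "Gh n u H' (Suc i) = Gh n u (h'' @ [\<sigma> h'']) (Suc i)"
        unfolding H'_def by (rule Gh_term) (use td(4) il in auto)
      have "sum (Gh n u H' (Suc i)) A / real (card A) \<le> Gh n u H' (Suc i) (t H')"
        by (rule max_ge_avg) (use fin m1 in auto)
      moreover have "sum (Gh n u H' (Suc i)) A = (\<Sum>y\<in>A. \<Sum>j=Suc i..n. u j y)"
        unfolding GH' using Gh_last[of h'' "Suc i" n u "\<sigma> h''"] td(4) il Pset_sum[OF qP]
        by (simp add: sum_subtractf)
      ultimately have c1: "C (Suc i) \<le> Gh n u H' (Suc i) (t H')" unfolding C_def by simp
      have m2: "t H \<in> A" "\<forall>y\<in>A. Gh n u H i y \<le> Gh n u H i (t H)"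
        using tmax[of h'' i] td(4) il unfolding H_def by auto
      have c2: "Gh n u H (Suc i) (t H) = C (Suc i)"
        using const[of h'' "Suc i" "t H"] td(4) il m2(1) unfolding H_def by auto
      have gi: "Gh n u H' i = Gh n u H i"
        unfolding H'_def H_def using Gh_term[of i "h'' @ [\<sigma> h'']" n u s] Gh_term[of i h'' n u s]
          Gh_append[of i h'' n u "[\<sigma> h'']"] td(4) il by auto
      have "payoff n u (s(i := \<sigma>)) t h i = Gh n u H' i (t H') - Gh n u H' (Suc i) (t H')"
        using payoff_Gh[of n i u "s(i := \<sigma>)" t h] n2 il td(1) unfolding H'_def by auto
      moreover have "payoff n u s t h i = Gh n u H i (t H) - Gh n u H (Suc i) (t H)"
        using payoff_Gh[of n i u s t h] n2 il td(2) unfolding H_def by auto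
      moreover have "Gh n u H' i (t H') = Gh n u H i (t H')" by (simp add: gi)
      moreover have "Gh n u H i (t H') \<le> Gh n u H i (t H)" using m2(2) m1(1) by blast
      ultimately show ?thesis using c1 c2 by linarith
    qed
  qed
  have out: "outcome n s t [] = a"
  proof -
    let ?H = "terminal n s []"
    have W: "Gh n u ?H 1 x = (\<Sum>i=1..n. u i x)" for x unfolding Gh_def by simp
    have cc: "Gh n u ?H j x = Gh n u ?H j y"
      if "1 < j" "j \<le> n" "x \<in> A" "y \<in> A" for j x y
      using const[of "[]" j x] const[of "[]" j y] that n2 by simp
    have "Tr n u A ?H (n - 1) = A"
      using Tr_const[of 1 n A u ?H "n - 1", OF cc] by blast
    moreover have "n - (n - 1) = 1" using n2 by simp
    moreover obtain n' where n': "n = Suc n'" using n2 by (cases n) auto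
    moreover have "Tr n u A ?H (Suc n') = argmx (Gh n u ?H (n - n')) (Tr n u A ?H n')" by simp
    ultimately have T: "Tr n u A ?H n = argmx (Gh n u ?H 1) A" by simp
    have aA: "a \<in> A" and aW: "(\<Sum>i=1..n. u i a) = (MAX b\<in>A. \<Sum>i=1..n. u i b)"
      using eff unfolding efficient_def by auto
    have "(\<Sum>i=1..n. u i y) \<le> (\<Sum>i=1..n. u i a)" if "y \<in> A" for y
      unfolding aW by (rule Max_ge) (use fin that in auto)
    then have "a \<in> argmx (Gh n u ?H 1) A" unfolding argmx_def W using aA by auto
    then show ?thesis unfolding outcome_def t_def tC_def T by simp
  qed
  show ?thesis using spne out unfolding s_def t_def by simp
qed


theorem proposition2:
  fixes n :: nat and A :: "'a set" and u :: "nat \<Rightarrow> 'a \<Rightarrow> real"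
  assumes "n \<ge> 2" and "finite A" and "A \<noteq> {}"
  shows "(\<forall>s t. SPNE n A u s t \<longrightarrow> efficient n A u (outcome n s t []))
       \<and> (\<forall>a. efficient n A u a \<longrightarrow> (\<exists>s t. SPNE n A u s t \<and> outcome n s t [] = a))"
proof (intro conjI allI impI)
  fix s t assume sp: "SPNE n A u s t"
  have r: "t (terminal n s []) \<in> A \<and> (\<forall>b\<in>A. Gh n u [] 1 b \<le> Gh n u [] 1 (t (terminal n s [])))"
    using spne_opt[OF sp assms(1,2,3), of 1 "[]"] assms(1) by auto
  have W: "Gh n u [] 1 x = (\<Sum>i=1..n. u i x)" for x unfolding Gh_def by simp
  have "(MAX b\<in>A. \<Sum>i=1..n. u i b) = (\<Sum>i=1..n. u i (t (terminal n s [])))"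
    by (rule Max_eqI) (use r W assms(2) in auto)
  then show "efficient n A u (outcome n s t [])"
    unfolding efficient_def outcome_def using r by simp
next
  fix a assume "efficient n A u a"
  then show "\<exists>s t. SPNE n A u s t \<and> outcome n s t [] = a"
    using part2[OF assms(1,2,3)] by blast
qed

end
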